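(* Let $p\in[1,\infty)$, $q\in[1,\infty]$, integers $s_1,s_2,m_1,n\ge1$, $\epsilon\in\{-1,+1\}^n$, points $x_1,\dots,x_n\in\mathbb{R}^{m_1}$ and any function $g:\mathbb{R}^{m_1}\to\mathbb{R}^{s_1}$. Then $$\sup_{0\neq V\in\mathbb{R}^{s_1\times s_2}}\frac{1}{\|V\|_{p,q}}\Big\|\sum_{i=1}^n\epsilon_i\,\sigma\circ\big(V^Tg(x_i)\big)\Big\|_{p^*}=s_2^{[\frac1{p^*}-\frac1q]_+}\sup_{0\ne v\in\mathbb{R}^{s_1}}\frac1{\|v\|_p}\Big|\sum_{i=1}^n\epsilon_i\,\sigma\big(\langle v,g(x_i)\rangle\big)\Big|.$$
   Context: $p^*\in(1,\infty]$ is defined by $1/p+1/p^*=1$; $[x]_+=\max(x,0)$. $\sigma(u)=\max(u,0)$, applied coordinatewise to vectors. For a real $s_1\times s_2$ matrix $A=(a_{ij})$: $\|A\|_{p,q}=\big(\sum_{j=1}^{s_2}(\sum_{i=1}^{s_1}|a_{ij}|^p)^{q/p}\big)^{1/q}$ for $q<\infty$, and $\|A\|_{p,\infty}=\max_j(\sum_{i}|a_{ij}|^p)^{1/p}$. *)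

theory Defs
  imports "HOL-Analysis.Analysis"
begin

text \<open>Exponents in [1,\<infinity>] are represented as extended reals.\<close>

definition relu :: "real \<Rightarrow> real" where
  "relu u = max u 0"

definition conj_exp :: "real \<Rightarrow> ereal" where
  "conj_exp p = (if p = 1 then \<infinity> else ereal (p / (p - 1)))"

definition inv_exp :: "ereal \<Rightarrow> real" where
  "inv_exp r = (if r = \<infinity> then 0 else 1 / real_of_ereal r)"

definition lpnorm :: "ereal \<Rightarrow> real ^ 'n \<Rightarrow> real" where
  "lpnorm r x = (if r = \<infinity> then Max (range (\<lambda>i. \<bar>x $ i\<bar>))
      else (\<Sum>i\<in>UNIV. \<bar>x $ i\<bar> powr real_of_ereal r) powr (1 / real_of_ereal r))"

text \<open>The (p,q) matrix norm of an s1 x s2 matrix A (rows indexed by 's1, columns by 's2):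
  the l^q norm of the vector of l^p norms of the columns.\<close>
definition matnorm :: "ereal \<Rightarrow> ereal \<Rightarrow> real ^ 's2 ^ 's1 \<Rightarrow> real" where
  "matnorm p q A = lpnorm q (\<chi> j. lpnorm p (\<chi> i. A $ i $ j))"

end

theory Submission
  imports Defs
begin

lemma lp_real: "lpnorm (ereal r) x = (\<Sum>i\<in>UNIV. \<bar>x $ i\<bar> powr r) powr (1 / r)"
  by (simp add: lpnorm_def)

lemma lp_inf: "lpnorm \<infinity> x = Max (range (\<lambda>i. \<bar>x $ i\<bar>))"
  by (simp add: lpnorm_def)

lemma ereal_ge1_cases:
  assumes "(1::ereal) \<le> r"
  obtains "r = \<infinity>" | r' where "r = ereal r'" "1 \<le> r'"
  using assms by (cases r) auto

lemma lp_comp_le: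
  fixes x :: "real ^ 'n"
  assumes "1 \<le> r"
  shows "\<bar>x $ i\<bar> \<le> lpnorm r x"
  using assms
proof (cases rule: ereal_ge1_cases)
  case 1
  then show ?thesis by (simp add: lp_inf)
next
  case (2 r')
  have "\<bar>x $ i\<bar> powr r' \<le> (\<Sum>j\<in>UNIV. \<bar>x $ j\<bar> powr r')"
    by (rule member_le_sum) auto
  then have "(\<bar>x $ i\<bar> powr r') powr (1/r') \<le> (\<Sum>j\<in>UNIV. \<bar>x $ j\<bar> powr r') powr (1/r')"
    using 2 by (intro powr_mono2) auto
  moreover have "(\<bar>x $ i\<bar> powr r') powr (1/r') = \<bar>x $ i\<bar>"
    using 2 by (simp add: powr_powr)
  ultimately show ?thesis using 2 by (simp add: lp_real)
qed

lemma lp_nonneg: "0 \<le> lpnorm r (x :: real ^ 'n)"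
proof (cases "r = \<infinity>")
  case True
  have "\<bar>x $ undefined\<bar> \<le> Max (range (\<lambda>i. \<bar>x $ i\<bar>))"
    by (rule Max_ge) auto
  note h = order_trans[OF abs_ge_zero this]
  show ?thesis using True h by (simp add: lp_inf)
next
  case False
  then show ?thesis by (simp add: lpnorm_def)
qed

lemma lp_pos:
  fixes x :: "real ^ 'n"
  assumes "1 \<le> r" "x \<noteq> 0"
  shows "0 < lpnorm r x"
proof -
  obtain i where "x $ i \<noteq> 0" using assms(2) by (metis vec_eq_iff zero_index)
  then show ?thesis using lp_comp_le[OF assms(1), of x i] by simp
qed

lemma lp_mono:
  fixes x y :: "real ^ 'n"
  assumes "1 \<le> r" "\<And>i. \<bar>x $ i\<bar> \<le> \<bar>y $ i\<bar>"
  shows "lpnorm r x \<le> lpnorm r y"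
  using assms(1)
proof (cases rule: ereal_ge1_cases)
  case 1
  have "\<bar>x $ i\<bar> \<le> Max (range (\<lambda>i. \<bar>y $ i\<bar>))" for i
  proof -
    have "\<bar>y $ i\<bar> \<le> Max (range (\<lambda>i. \<bar>y $ i\<bar>))" by (rule Max_ge) auto
    then show ?thesis using assms(2)[of i] by linarith
  qed
  then show ?thesis using 1 by (simp add: lp_inf Max_le_iff)
next
  case (2 r')
  have "(\<Sum>i\<in>UNIV. \<bar>x $ i\<bar> powr r') \<le> (\<Sum>i\<in>UNIV. \<bar>y $ i\<bar> powr r')"
    using 2 assms(2) by (intro sum_mono powr_mono2) auto
  then show ?thesis using 2 by (simp add: lp_real) (rule powr_mono2, auto intro: sum_nonneg)
qed

lemma lp_scale:
  fixes x :: "real ^ 'n"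
  assumes "1 \<le> r"
  shows "lpnorm r (c *\<^sub>R x) = \<bar>c\<bar> * lpnorm r x"
  using assms
proof (cases rule: ereal_ge1_cases)
  case 1
  have fin: "finite (range (\<lambda>i. \<bar>x $ i\<bar>))" by simp
  obtain i0 where i0: "Max (range (\<lambda>i. \<bar>x $ i\<bar>)) = \<bar>x $ i0\<bar>"
    using Max_in[OF fin] by (metis (no_types, lifting) UNIV_not_empty empty_is_image imageE)
  have le: "\<bar>x $ i\<bar> \<le> \<bar>x $ i0\<bar>" for i
    using lp_comp_le[of "\<infinity>" x i] i0 by (simp add: lp_inf)
  have "Max (range (\<lambda>i. \<bar>c * x $ i\<bar>)) = \<bar>c\<bar> * \<bar>x $ i0\<bar>"
  proof (rule antisym)
    show "Max (range (\<lambda>i. \<bar>c * x $ i\<bar>)) \<le> \<bar>c\<bar> * \<bar>x $ i0\<bar>"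
      using le by (simp add: Max_le_iff abs_mult mult_left_mono)
    show "\<bar>c\<bar> * \<bar>x $ i0\<bar> \<le> Max (range (\<lambda>i. \<bar>c * x $ i\<bar>))"
      by (rule Max_ge) (auto simp: abs_mult)
  qed
  then show ?thesis using 1 i0 by (simp add: lp_inf)
next
  case (2 r')
  have "(\<Sum>i\<in>UNIV. \<bar>c * x $ i\<bar> powr r') = \<bar>c\<bar> powr r' * (\<Sum>i\<in>UNIV. \<bar>x $ i\<bar> powr r')"
    by (simp add: abs_mult powr_mult sum_distrib_left)
  then show ?thesis using 2 by (simp add: lp_real powr_mult powr_powr)
qed

lemma lp_ones:
  assumes "1 \<le> r"
  shows "lpnorm r (\<chi> i. 1 :: real ^ 'n) = real CARD('n) powr inv_exp r"
  using assms
proof (cases rule: ereal_ge1_cases)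
  case 1
  have "range (\<lambda>i::'n. 1::real) = {1}" by auto
  then show ?thesis using 1 by (simp add: lp_inf inv_exp_def)
next
  case (2 r')
  then show ?thesis by (simp add: lp_real inv_exp_def)
qed

lemma lp_axis:
  assumes "1 \<le> r"
  shows "lpnorm r (axis k 1 :: real ^ 'n) = 1"
  using assms
proof (cases rule: ereal_ge1_cases)
  case 1
  have "Max (range (\<lambda>i. \<bar>(axis k 1 :: real ^ 'n) $ i\<bar>)) = 1"
  proof (rule antisym)
    show "Max (range (\<lambda>i. \<bar>(axis k 1 :: real ^ 'n) $ i\<bar>)) \<le> 1"
      by (simp add: Max_le_iff axis_def)
    show "1 \<le> Max (range (\<lambda>i. \<bar>(axis k 1 :: real ^ 'n) $ i\<bar>))"
      by (rule Max_ge) (auto simp: axis_def intro!: image_eqI[where x=k])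
  qed
  then show ?thesis using 1 by (simp add: lp_inf)
next
  case (2 r')
  have "(\<Sum>i\<in>UNIV. \<bar>(axis k 1 :: real ^ 'n) $ i\<bar> powr r') = (\<Sum>i\<in>UNIV. if i = k then 1 else 0)"
    by (rule sum.cong) (auto simp: axis_def)
  then show ?thesis using 2 by (simp add: lp_real)
qed


lemma power_mean:
  fixes c :: "'a \<Rightarrow> real"
  assumes "finite S" "\<And>i. i \<in> S \<Longrightarrow> 0 \<le> c i" "1 < u"
  shows "(\<Sum>i\<in>S. c i) \<le> real (card S) powr (1 - 1/u) * (\<Sum>i\<in>S. c i powr u) powr (1/u)"
proof -
  define A where "A = (\<Sum>i\<in>S. c i powr u) powr (1/u)"
  have SA: "(\<Sum>i\<in>S. c i powr u) = A powr u"
    using assms by (simp add: A_def powr_powr sum_nonneg)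
  show ?thesis
  proof (cases "A = 0 \<or> S = {}")
    case True
    then have "\<forall>i\<in>S. c i = 0"
    proof
      assume "A = 0"
      then have "(\<Sum>i\<in>S. c i powr u) = 0" using SA assms(3) by simp
      then have "\<forall>i\<in>S. c i powr u = 0" using assms(1) by (simp add: sum_nonneg_eq_0_iff)
      then show ?thesis by simp
    qed simp
    then show ?thesis by simp
  next
    case False
    then have Apos: "0 < A" and Sne: "S \<noteq> {}" using A_def by auto
    define w where "w = u / (u - 1)"
    have w1: "1 < w" using assms(3) by (simp add: w_def field_simps)
    have uw: "1/u + 1/w = 1" using assms(3) by (simp add: w_def field_simps)
    define N where "N = real (card S)"
    have Npos: "0 < N" using Sne assms(1) by (simp add: N_def card_gt_0_iff)
    define B where "B = N powr (1/w)"
    have Bpos: "0 < B" using Npos by (simp add: B_def)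
    have Bw: "(1/B) powr w = 1 / N"
      using Npos w1 by (simp add: B_def powr_divide powr_powr)
    have each: "(c i / A) * (1/B) \<le> (c i / A) powr u / u + (1/B) powr w / w" if "i \<in> S" for i
      using Youngs_inequality[of u w "c i / A" "1/B"] assms(2)[OF that] assms(3) w1 uw Apos Bpos
      by simp
    have "(\<Sum>i\<in>S. (c i / A) * (1/B)) \<le> (\<Sum>i\<in>S. (c i / A) powr u / u + (1/B) powr w / w)"
      using each by (rule sum_mono)
    also have "\<dots> = (\<Sum>i\<in>S. c i powr u) / A powr u / u + N * (1/N) / w"
      unfolding Bw using Apos assms(2) by (simp add: sum.distrib powr_divide sum_divide_distrib N_def)
    also have "\<dots> = 1"
      using SA Apos Npos uw by simp
    finally have "(\<Sum>i\<in>S. c i) / (A * B) \<le> 1"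
      by (simp add: sum_divide_distrib)
    then have "(\<Sum>i\<in>S. c i) \<le> A * B" using Apos Bpos by (simp add: divide_le_eq)
    moreover have "1/w = 1 - 1/u" using uw by simp
    ultimately show ?thesis by (simp add: B_def N_def A_def mult.commute)
  qed
qed

lemma lp_L1:
  fixes x :: "real ^ 'n"
  assumes "1 \<le> r" "r \<le> t"
  shows "lpnorm (ereal t) x \<le> lpnorm (ereal r) x"
proof -
  define S where "S = lpnorm (ereal r) x"
  have S0: "0 \<le> S" by (simp add: S_def lp_nonneg)
  have le: "\<bar>x $ i\<bar> \<le> S" for i using lp_comp_le[of "ereal r" x i] assms by (simp add: S_def)
  have Sr: "(\<Sum>i\<in>UNIV. \<bar>x $ i\<bar> powr r) = S powr r"
    using assms by (simp add: S_def lp_real powr_powr sum_nonneg)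
  have "(\<Sum>i\<in>UNIV. \<bar>x $ i\<bar> powr t) \<le> (\<Sum>i\<in>UNIV. \<bar>x $ i\<bar> powr r * S powr (t - r))"
  proof (rule sum_mono)
    fix i
    have "\<bar>x $ i\<bar> powr t = \<bar>x $ i\<bar> powr r * \<bar>x $ i\<bar> powr (t - r)"
      by (simp flip: powr_add)
    also have "\<dots> \<le> \<bar>x $ i\<bar> powr r * S powr (t - r)"
      using le[of i] assms by (intro mult_left_mono powr_mono2) auto
    finally show "\<bar>x $ i\<bar> powr t \<le> \<bar>x $ i\<bar> powr r * S powr (t - r)" .
  qed
  also have "\<dots> = S powr t"
    by (simp add: Sr flip: sum_distrib_right powr_add)
  finally have "(\<Sum>i\<in>UNIV. \<bar>x $ i\<bar> powr t) powr (1/t) \<le> (S powr t) powr (1/t)"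
    using assms by (intro powr_mono2) (auto intro: sum_nonneg)
  also have "\<dots> = S" using assms S0 by (simp add: powr_powr)
  finally show ?thesis by (simp add: lp_real S_def)
qed

lemma lp_L2:
  fixes x :: "real ^ 'n"
  assumes "1 \<le> r"
  shows "lpnorm \<infinity> x \<le> lpnorm (ereal r) x"
  using lp_comp_le[of "ereal r" x] assms by (simp add: lp_inf Max_le_iff)

lemma lp_L3:
  fixes x :: "real ^ 'n"
  assumes "1 \<le> r" "r \<le> t"
  shows "lpnorm (ereal r) x \<le> real CARD('n) powr (1/r - 1/t) * lpnorm (ereal t) x"
proof (cases "r = t")
  case True
  then show ?thesis by simp
next
  case False
  then have rt: "r < t" using assms by simp
  have "(\<Sum>i\<in>UNIV. \<bar>x $ i\<bar> powr r) \<le> real CARD('n) powr (1 - 1/(t/r)) *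
          (\<Sum>i\<in>UNIV. (\<bar>x $ i\<bar> powr r) powr (t/r)) powr (1/(t/r))"
    using assms rt by (intro power_mean) auto
  also have "\<dots> = real CARD('n) powr (1 - r/t) * (\<Sum>i\<in>UNIV. \<bar>x $ i\<bar> powr t) powr (r/t)"
    using assms by (simp add: powr_powr)
  finally have "(\<Sum>i\<in>UNIV. \<bar>x $ i\<bar> powr r) powr (1/r) \<le>
      (real CARD('n) powr (1 - r/t) * (\<Sum>i\<in>UNIV. \<bar>x $ i\<bar> powr t) powr (r/t)) powr (1/r)"
    using assms by (intro powr_mono2) (auto intro: sum_nonneg)
  also have "\<dots> = real CARD('n) powr ((1 - r/t) / r) * (\<Sum>i\<in>UNIV. \<bar>x $ i\<bar> powr t) powr (1/t)"
    using assms by (simp add: powr_mult powr_powr)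
  also have "(1 - r/t) / r = 1/r - 1/t" using assms by (simp add: field_simps)
  finally show ?thesis by (simp add: lp_real)
qed

lemma lp_L4:
  fixes x :: "real ^ 'n"
  assumes "1 \<le> r"
  shows "lpnorm (ereal r) x \<le> real CARD('n) powr (1/r) * lpnorm \<infinity> x"
proof -
  define M where "M = lpnorm \<infinity> x"
  have M0: "0 \<le> M" by (simp add: M_def lp_nonneg)
  have le: "\<bar>x $ i\<bar> \<le> M" for i using lp_comp_le[of "\<infinity>" x i] by (simp add: M_def)
  have "(\<Sum>i\<in>UNIV. \<bar>x $ i\<bar> powr r) \<le> (\<Sum>i\<in>(UNIV::'n set). M powr r)"
    using le assms by (intro sum_mono powr_mono2) auto
  also have "\<dots> = real CARD('n) * M powr r" by simp
  finally have "(\<Sum>i\<in>UNIV. \<bar>x $ i\<bar> powr r) powr (1/r) \<le> (real CARD('n) * M powr r) powr (1/r)"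
    using assms by (intro powr_mono2) (auto intro: sum_nonneg)
  also have "\<dots> = real CARD('n) powr (1/r) * M"
    using assms M0 by (simp add: powr_mult powr_powr)
  finally show ?thesis by (simp add: lp_real M_def)
qed

lemma lp_compare:
  fixes x :: "real ^ 'n"
  assumes "1 \<le> r" "1 \<le> t"
  shows "lpnorm r x \<le> real CARD('n) powr (max (inv_exp r - inv_exp t) 0) * lpnorm t x"
  using assms(1)
proof (cases rule: ereal_ge1_cases)
  case 1
  from assms(2) show ?thesis
  proof (cases rule: ereal_ge1_cases)
    case 1
    then show ?thesis using \<open>r = \<infinity>\<close> by (simp add: inv_exp_def)
  next
    case (2 t')
    then show ?thesis using \<open>r = \<infinity>\<close> lp_L2[of t' x] by (simp add: inv_exp_def)
  qed
next
  case (2 r')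
  from assms(2) show ?thesis
  proof (cases rule: ereal_ge1_cases)
    case 1
    then show ?thesis using 2 lp_L4[of r' x] by (simp add: inv_exp_def max_def)
  next
    case (2 t')
    note r' = \<open>r = ereal r'\<close> \<open>1 \<le> r'\<close>
    show ?thesis
    proof (cases "r' \<le> t'")
      case True
      then have "1/t' \<le> 1/r'" using r' by (simp add: frac_le)
      then show ?thesis using True r' 2 lp_L3[of r' t' x] by (simp add: inv_exp_def max_def)
    next
      case False
      then have "1/r' \<le> 1/t'" using 2 by (simp add: frac_le)
      then show ?thesis using False r' 2 lp_L1[of t' r' x] by (simp add: inv_exp_def max_def)
    qed
  qed
qed

lemma lp_extremal:
  assumes "1 \<le> r" "1 \<le> t"
  shows "\<exists>a :: real ^ 'n. (\<forall>j. 0 \<le> a $ j) \<and> a \<noteq> 0 \<and>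
    real CARD('n) powr (max (inv_exp r - inv_exp t) 0) * lpnorm t a \<le> lpnorm r a"
proof (cases "inv_exp r - inv_exp t \<le> 0")
  case True
  define a where "a = (axis undefined 1 :: real ^ 'n)"
  have "a $ undefined = 1" by (simp add: a_def axis_def)
  then have "a \<noteq> 0" by auto
  moreover have "\<forall>j. 0 \<le> a $ j" by (simp add: a_def axis_def)
  moreover have "lpnorm r a = 1" "lpnorm t a = 1" using assms by (simp_all add: a_def lp_axis)
  ultimately show ?thesis using True
    by (intro exI[of _ a]) (simp add: max_def)
next
  case False
  define a where "a = (\<chi> i. 1 :: real ^ 'n)"
  have "a $ undefined = 1" by (simp add: a_def)
  then have "a \<noteq> 0" by auto
  moreover have "\<forall>j. 0 \<le> a $ j" by (simp add: a_def)
  moreover have "real CARD('n) powr (inv_exp r - inv_exp t) * real CARD('n) powr inv_exp t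
      = real CARD('n) powr inv_exp r" by (simp flip: powr_add)
  moreover have "lpnorm r a = real CARD('n) powr inv_exp r" "lpnorm t a = real CARD('n) powr inv_exp t"
    using assms by (simp_all add: a_def lp_ones)
  ultimately show ?thesis using False
    by (intro exI[of _ a]) (simp add: max_def)
qed


lemma relu_scale: "0 \<le> c \<Longrightarrow> relu (c * u) = c * relu u"
  by (auto simp: relu_def max_def mult_le_0_iff zero_le_mult_iff)

lemma conj_exp_ge1: "1 \<le> p \<Longrightarrow> 1 \<le> conj_exp p"
  by (auto simp: conj_exp_def field_simps)

theorem mainTheorem7:
  fixes p :: real and q :: ereal and n :: nat
    and eps :: "nat \<Rightarrow> real"
    and x :: "nat \<Rightarrow> real ^ 'm1"
    and g :: "real ^ 'm1 \<Rightarrow> real ^ 's1"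
  assumes "1 \<le> p" and "1 \<le> q" and "1 \<le> n"
    and "\<forall>i\<in>{1..n}. eps i \<in> {-1, 1}"
  shows "(SUP V \<in> {V :: real ^ 's2 ^ 's1. V \<noteq> 0}.
            lpnorm (conj_exp p)
              (\<Sum>i = 1..n. eps i *\<^sub>R (\<chi> j. relu ((transpose V *v g (x i)) $ j)))
            / matnorm (ereal p) q V)
         = real CARD('s2) powr (max (inv_exp (conj_exp p) - inv_exp q) 0)
           * (SUP v \<in> {v :: real ^ 's1. v \<noteq> 0}.
                \<bar>\<Sum>i = 1..n. eps i * relu (v \<bullet> g (x i))\<bar> / lpnorm (ereal p) v)"
proof -
  define f where "f v = (\<Sum>i = 1..n. eps i * relu (v \<bullet> g (x i)))" for v :: "real ^ 's1"
  define col where "col V j = (\<chi> k. V $ k $ j)" for V :: "real ^ 's2 ^ 's1" and j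
  define e where "e = max (inv_exp (conj_exp p) - inv_exp q) 0"
  define s where "s = real CARD('s2) powr e"
  define R where "R v = \<bar>f v\<bar> / lpnorm (ereal p) v" for v
  define C where "C = (SUP v \<in> {v :: real ^ 's1. v \<noteq> 0}. R v)"
  define L where "L V = lpnorm (conj_exp p)
              (\<Sum>i = 1..n. eps i *\<^sub>R (\<chi> j. relu ((transpose V *v g (x i)) $ j)))
            / matnorm (ereal p) q V" for V :: "real ^ 's2 ^ 's1"
  have p1: "1 \<le> ereal p" using assms(1) by simp
  have ps1: "1 \<le> conj_exp p" using assms(1) by (rule conj_exp_ge1)
  have spos: "0 < s" by (simp add: s_def)
  have F: "(\<Sum>i = 1..n. eps i *\<^sub>R (\<chi> j. relu ((transpose V *v g (x i)) $ j))) = (\<chi> j. f (col V j))" for V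
    by (simp add: vec_eq_iff sum_component f_def col_def matrix_vector_mult_def transpose_def inner_vec_def)
  have M: "matnorm (ereal p) q V = lpnorm q (\<chi> j. lpnorm (ereal p) (col V j))" for V
    by (simp add: matnorm_def col_def)
  have fscale: "f (c *\<^sub>R v) = c * f v" if "0 \<le> c" for c v
    using that by (simp add: f_def relu_scale sum_distrib_left algebra_simps)
  have f0: "f 0 = 0" by (simp add: f_def relu_def)
  define K where "K = (\<Sum>i = 1..n. \<bar>eps i\<bar> * (\<Sum>k\<in>UNIV. \<bar>g (x i) $ k\<bar>))"
  have fbound: "\<bar>f v\<bar> \<le> K * lpnorm (ereal p) v" for v
  proof -
    define l where "l = lpnorm (ereal p) v"
    have ip: "\<bar>v \<bullet> y\<bar> \<le> l * (\<Sum>k\<in>UNIV. \<bar>y $ k\<bar>)" for y :: "real ^ 's1"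
    proof -
      have "\<bar>v \<bullet> y\<bar> \<le> (\<Sum>k\<in>UNIV. \<bar>v $ k\<bar> * \<bar>y $ k\<bar>)"
        unfolding inner_vec_def by (rule order_trans[OF sum_abs]) (simp add: abs_mult)
      also have "\<dots> \<le> (\<Sum>k\<in>UNIV. l * \<bar>y $ k\<bar>)"
        using lp_comp_le[OF p1, of v] by (intro sum_mono mult_right_mono) (auto simp: l_def)
      finally show ?thesis by (simp add: sum_distrib_left)
    qed
    have "\<bar>f v\<bar> \<le> (\<Sum>i = 1..n. \<bar>eps i * relu (v \<bullet> g (x i))\<bar>)"
      unfolding f_def by (rule sum_abs)
    also have "\<dots> \<le> (\<Sum>i = 1..n. \<bar>eps i\<bar> * (l * (\<Sum>k\<in>UNIV. \<bar>g (x i) $ k\<bar>)))"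
    proof (rule sum_mono)
      fix i
      have "\<bar>relu (v \<bullet> g (x i))\<bar> \<le> \<bar>v \<bullet> g (x i)\<bar>" by (simp add: relu_def)
      then have "\<bar>relu (v \<bullet> g (x i))\<bar> \<le> l * (\<Sum>k\<in>UNIV. \<bar>g (x i) $ k\<bar>)" using ip order_trans by blast
      then show "\<bar>eps i * relu (v \<bullet> g (x i))\<bar> \<le> \<bar>eps i\<bar> * (l * (\<Sum>k\<in>UNIV. \<bar>g (x i) $ k\<bar>))"
        by (simp add: abs_mult mult_left_mono)
    qed
    also have "\<dots> = K * l" by (simp add: K_def sum_distrib_right sum_distrib_left algebra_simps)
    finally show ?thesis by (simp add: l_def)
  qed
  have bddR: "bdd_above (R ` {v. v \<noteq> 0})"
  proof (rule bdd_aboveI2)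
    fix v :: "real ^ 's1" assume "v \<in> {v. v \<noteq> 0}"
    then have "0 < lpnorm (ereal p) v" using lp_pos[OF p1] by auto
    then show "R v \<le> K" using fbound[of v] by (simp add: R_def divide_le_eq)
  qed
  define v0 where "v0 = (axis undefined 1 :: real ^ 's1)"
  have v0: "v0 \<noteq> 0" by (simp add: v0_def vec_eq_iff axis_def)
  have Rnn: "0 \<le> R v" for v by (simp add: R_def lp_nonneg)
  have C0: "0 \<le> C"
    using cSUP_upper[OF _ bddR, of v0] v0 Rnn[of v0] unfolding C_def by simp
  have Cb: "\<bar>f v\<bar> \<le> C * lpnorm (ereal p) v" for v
  proof (cases "v = 0")
    case True
    then show ?thesis using C0 by (simp add: f0 lp_nonneg)
  next
    case False
    then have lp: "0 < lpnorm (ereal p) v" using lp_pos[OF p1] by auto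
    have "R v \<le> C" using cSUP_upper[OF _ bddR, of v] False unfolding C_def by simp
    then show ?thesis using lp by (simp add: R_def divide_le_eq)
  qed
  have upper: "L V \<le> s * C" if Vnz: "V \<noteq> 0" for V
  proof -
    define b where "b = (\<chi> j. lpnorm (ereal p) (col V j))"
    obtain k j where "V $ k $ j \<noteq> 0" using Vnz by (metis vec_eq_iff zero_index)
    then have "col V j \<noteq> 0" by (auto simp: col_def vec_eq_iff)
    then have "0 < b $ j" using lp_pos[OF p1] by (simp add: b_def)
    then have "b \<noteq> 0" by auto
    then have bpos: "0 < lpnorm q b" using lp_pos[OF assms(2)] by auto
    have "lpnorm (conj_exp p) (\<chi> j. f (col V j)) \<le> lpnorm (conj_exp p) (C *\<^sub>R b)"
      using Cb C0 by (intro lp_mono[OF ps1]) (simp add: b_def abs_mult lp_nonneg)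
    also have "\<dots> = C * lpnorm (conj_exp p) b" using C0 by (simp add: lp_scale[OF ps1])
    also have "\<dots> \<le> C * (s * lpnorm q b)"
      using lp_compare[OF ps1 assms(2), of b] C0 by (intro mult_left_mono) (auto simp: s_def e_def)
    finally show ?thesis using bpos unfolding L_def F M b_def[symmetric]
      by (simp add: divide_le_eq algebra_simps)
  qed
  have bddL: "bdd_above (L ` {V. V \<noteq> 0})"
    using upper by (intro bdd_aboveI2) auto
  have ne: "{V :: real ^ 's2 ^ 's1. V \<noteq> 0} \<noteq> {}"
  proof -
    have "(\<chi> k. \<chi> j. 1 :: real ^ 's2 ^ 's1) \<noteq> 0" by (simp add: vec_eq_iff)
    then show ?thesis by blast
  qed
  have le1: "(SUP V \<in> {V. V \<noteq> 0}. L V) \<le> s * C"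
    using ne upper by (intro cSUP_least) auto
  obtain a :: "real ^ 's2" where a: "\<forall>j. 0 \<le> a $ j" "a \<noteq> 0"
    "s * lpnorm q a \<le> lpnorm (conj_exp p) a"
    using lp_extremal[OF ps1 assms(2)] unfolding s_def e_def by blast
  have aq: "0 < lpnorm q a" using lp_pos[OF assms(2) a(2)] .
  have lower: "s * R v \<le> (SUP V \<in> {V. V \<noteq> 0}. L V)" if vnz: "v \<noteq> 0" for v
  proof -
    define W where "W = (\<chi> k. \<chi> j. a $ j * v $ k :: real ^ 's2 ^ 's1)"
    have cW: "col W j = a $ j *\<^sub>R v" for j by (simp add: W_def col_def vec_eq_iff)
    obtain j where "a $ j \<noteq> 0" using a(2) by (metis vec_eq_iff zero_index)
    moreover obtain k where "v $ k \<noteq> 0" using vnz by (metis vec_eq_iff zero_index)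
    ultimately have "W $ k $ j \<noteq> 0" by (simp add: W_def)
    then have W0: "W \<noteq> 0" by auto
    have lpv: "0 < lpnorm (ereal p) v" using lp_pos[OF p1 vnz] .
    have e1: "(\<chi> j. f (col W j)) = f v *\<^sub>R a"
      using a(1) by (simp add: cW fscale vec_eq_iff mult.commute)
    have e2: "(\<chi> j. lpnorm (ereal p) (col W j)) = lpnorm (ereal p) v *\<^sub>R a"
      using a(1) by (simp add: cW lp_scale[OF p1] vec_eq_iff mult.commute)
    have LW: "L W = \<bar>f v\<bar> * lpnorm (conj_exp p) a / (lpnorm (ereal p) v * lpnorm q a)"
      using lpv unfolding L_def F M e1 e2 by (simp add: lp_scale[OF ps1] lp_scale[OF assms(2)])
    have "s * R v = \<bar>f v\<bar> * (s * lpnorm q a) / (lpnorm (ereal p) v * lpnorm q a)"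
      using aq by (simp add: R_def field_simps)
    also have "\<dots> \<le> L W" unfolding LW using a(3) lpv aq
      by (intro divide_right_mono mult_left_mono) auto
    also have "\<dots> \<le> (SUP V \<in> {V. V \<noteq> 0}. L V)"
      using W0 by (intro cSUP_upper[OF _ bddL]) auto
    finally show ?thesis .
  qed
  have "C \<le> (SUP V \<in> {V. V \<noteq> 0}. L V) / s"
    unfolding C_def
  proof (rule cSUP_least)
    show "{v :: real ^ 's1. v \<noteq> 0} \<noteq> {}" using v0 by blast
    fix v :: "real ^ 's1" assume "v \<in> {v. v \<noteq> 0}"
    then show "R v \<le> (SUP V \<in> {V. V \<noteq> 0}. L V) / s"
      using lower[of v] spos by (simp add: le_divide_eq mult.commute)
  qed
  then have "s * C \<le> (SUP V \<in> {V. V \<noteq> 0}. L V)" using spos by (simp add: le_divide_eq mult.commute)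
  with le1 have "(SUP V \<in> {V. V \<noteq> 0}. L V) = s * C" by simp
  then show ?thesis unfolding L_def s_def e_def C_def R_def f_def .
qed

end
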